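(* Let $G$ be a $1$-DCFG in Chomsky normal form, let $T$ be a derivation tree of a word $w\in L(G)$, and let $\pi=(i_1,j_1,k_1,l_1,i_2,j_2,k_2,l_2)$ and $\pi'=(i'_1,j'_1,k'_1,l'_1,i'_2,j'_2,k'_2,l'_2)$ be two $2$-pumps in $T$. Then, after possibly interchanging $\pi$ and $\pi'$, one of the following holds: 1. $l_2\le i'_1$; 2. $i_1\le i'_1\le l'_2\le j_1$ or $k_2\le i'_1\le l'_2\le l_2$; 3. $i_1\le i'_1\le j'_1\le j_1\le k_1\le k'_1\le l'_1\le l_1\le i_2\le i'_2\le j'_2\le j_2\le k_2\le k'_2\le l'_2\le l_2$; 4. $i_1\le i'_1\le j'_1\le k'_1\le j_1\le k_1\le l'_1\le l_1\le i_2\le i'_2\le j_2\le k_2\le j'_2\le k'_2\le l'_2\le l_2$; 5. $i_1\le i'_1\le j_1\le k_1\le j'_1\le k'_1\le l'_1\le l_1\le i_2\le i'_2\le j'_2\le k'_2\le j_2\le k_2\le l'_2\le l_2$; 6. $i_1\le i'_1\le j_1\le j'_1\le k'_1\le k_1\le l'_1\le l_1\le i_2\le i'_2\le j_2\le j'_2\le k'_2\le k_2\le l'_2\le l_2$; 7. $k_1\le i'_1\le l'_1\le l_1\le i_2\le i'_2\le l'_2\le j_2$; 8. $i_1\le i'_1\le l'_1\le j_1\le k_2\le i'_2\le l'_2\le l_2$; 9. $k_1\le i'_1\le l'_2\le l_1$ or $i_2\le i'_1\le l'_2\le j_2$; 10. $j_1\le i'_1\le l'_1\le k_1\le j_2\le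 i'_2\le l'_2\le k_2$; 11. $j_1\le i'_1\le l'_2\le k_1$ or $j_2\le i'_1\le l'_2\le k_2$; 12. $l_1\le i'_1\le l'_2\le i_2$.
   Context: Let $\Sigma$ be a finite alphabet and $1\notin\Sigma$ a separator; $\Sigma_1=\Sigma\cup\{1\}$, $\mathrm{rk}(w)=|w|_1$; for $\mathrm{rk}(u)\ge1$, $u\odot_1 v$ replaces the first occurrence of $1$ in $u$ by $v$. A $1$-DCFG in Chomsky normal form is $G=\langle N,\Sigma,P,S\rangle$ with nonterminals of rank $0$ or $1$, $\mathrm{rk}(S)=0$, and rules of the forms $A\to B\cdot C$ (with $\mathrm{rk}A=\mathrm{rk}B+\mathrm{rk}C\le1$), $A\to B\odot_1 C$ (with $\mathrm{rk}B=1$, $\mathrm{rk}A=\mathrm{rk}C$), where $B,C\in N\setminus\{S\}$, $A\to a$ with $a\in\Sigma_1$ ($\mathrm{rk}A=\mathrm{rk}a$), or $S\to\epsilon$. A derivation tree is a finite rooted ordered tree with nonterminal-labeled nodes, each internal node labeled $A$ having two children $B,C$ and annotated by a rule $A\to B\cdot C$ or $A\to B\odot_1 C$, each leaf labeled $A$ annotated by a rule $A\to a$ or $S\to\epsilon$. The yield of a node is the word of $\Sigma_1^*$ computed bottom-up ($a$ at a leaf with rule $A\to a$, $\epsilon$ for $S\to\epsilon$, concatenation resp. $\odot_1$ of the children's yields at internal nodes); $T$ is a derivation tree of $w$ if its root is labeled $S$ with yield $w$; $L(G)$ is the set of such $w$. The rank of a node is the rank of its label. Let $w=a_1\cdots a_n$;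 each letter of $\Sigma$ occurring in a yield comes from a leaf and thus corresponds to a position of $w$. For a node of rank $1$ its yield has the form $w_11w_2$ where $w_1=a_{i_1}\cdots a_{j_1-1}$ and $w_2=a_{i_2}\cdots a_{j_2-1}$ are contiguous segments of $w$ (as occurrences) with $i_1\le j_1\le i_2\le j_2$; the tuple $(i_1,j_1,i_2,j_2)$ is the constituent of the node. A node $v'$ is a direct descendant of $v$ if $v'$ is a proper descendant of $v$ and all nodes on the path between them (inclusive) have the same rank. A $2$-pump is a pair $(v,v')$ of internal nodes with the same label of rank $1$ such that $v'$ is a direct descendant of $v$; if the constituent of $v$ is $(i_1,l_1,i_2,l_2)$ and that of $v'$ is $(j_1,k_1,j_2,k_2)$, then $i_1\le j_1\le k_1\le l_1\le i_2\le j_2\le k_2\le l_2$ and the pump is identified with the tuple $(i_1,j_1,k_1,l_1,i_2,j_2,k_2,l_2)$. *)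

theory Defs
  imports Main
begin

text \<open>Symbols of \<Sigma>_1 = \<Sigma> \<union> {1}.\<close>
datatype 'a sym1 = Let 'a | One

fun rk_sym :: "'a sym1 \<Rightarrow> nat" where
  "rk_sym (Let a) = 0"
| "rk_sym One = 1"

text \<open>Rules: A -> B . C,  A -> B (.)_1 C,  A -> a (a in Sigma_1),  A -> epsilon (only for S).\<close>
datatype ('n,'a) rule =
    RConc 'n 'n 'n
  | RSubst 'n 'n 'n
  | RTerm 'n "'a sym1"
  | REps 'n

fun lhs :: "('n,'a) rule \<Rightarrow> 'n" where
  "lhs (RConc A B C) = A"
| "lhs (RSubst A B C) = A"
| "lhs (RTerm A a) = A"
| "lhs (REps A) = A"

definition cnf_1dcfg ::
  "'a set \<Rightarrow> 'n set \<Rightarrow> ('n,'a) rule set \<Rightarrow> 'n \<Rightarrow> ('n \<Rightarrow> nat) \<Rightarrow> bool" where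
  "cnf_1dcfg \<Sigma> N P S rk \<longleftrightarrow>
     finite \<Sigma> \<and> finite N \<and> finite P \<and> S \<in> N \<and> rk S = 0 \<and>
     (\<forall>A\<in>N. rk A \<le> 1) \<and>
     (\<forall>r\<in>P. (case r of
         RConc A B C \<Rightarrow> A \<in> N \<and> B \<in> N - {S} \<and> C \<in> N - {S} \<and>
                          rk A = rk B + rk C \<and> rk A \<le> 1
       | RSubst A B C \<Rightarrow> A \<in> N \<and> B \<in> N - {S} \<and> C \<in> N - {S} \<and>
                          rk B = 1 \<and> rk A = rk C
       | RTerm A a \<Rightarrow> A \<in> N \<and> (case a of Let b \<Rightarrow> b \<in> \<Sigma> | One \<Rightarrow> True) \<and>
                          rk A = rk_sym a
       | REps A \<Rightarrow> A = S))"

datatype ('n,'a) dtree =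
    Leaf "('n,'a) rule"
  | Node "('n,'a) rule" "('n,'a) dtree" "('n,'a) dtree"

fun root_rule :: "('n,'a) dtree \<Rightarrow> ('n,'a) rule" where
  "root_rule (Leaf r) = r"
| "root_rule (Node r l rr) = r"

definition label :: "('n,'a) dtree \<Rightarrow> 'n" where
  "label t = lhs (root_rule t)"

fun wf_tree :: "('n,'a) rule set \<Rightarrow> ('n,'a) dtree \<Rightarrow> bool" where
  "wf_tree P (Leaf r) \<longleftrightarrow> r \<in> P \<and> (case r of RTerm A a \<Rightarrow> True | REps A \<Rightarrow> True | _ \<Rightarrow> False)"
| "wf_tree P (Node r l rr) \<longleftrightarrow> r \<in> P \<and>
     (case r of RConc A B C \<Rightarrow> label l = B \<and> label rr = C
              | RSubst A B C \<Rightarrow> label l = B \<and> label rr = C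
              | _ \<Rightarrow> False) \<and> wf_tree P l \<and> wf_tree P rr"

text \<open>u (.)_1 v : replace the first occurrence of 1 in u by v.\<close>
fun subst1 :: "'a sym1 list \<Rightarrow> 'a sym1 list \<Rightarrow> 'a sym1 list" where
  "subst1 [] ys = []"
| "subst1 (x # xs) ys = (if x = One then ys @ xs else x # subst1 xs ys)"

fun yield :: "('n,'a) dtree \<Rightarrow> 'a sym1 list" where
  "yield (Leaf (RTerm A a)) = [a]"
| "yield (Leaf (REps A)) = []"
| "yield (Leaf (RConc A B C)) = []"
| "yield (Leaf (RSubst A B C)) = []"
| "yield (Node (RConc A B C) l r) = yield l @ yield r"
| "yield (Node (RSubst A B C) l r) = subst1 (yield l) (yield r)"
| "yield (Node (RTerm A a) l r) = []"
| "yield (Node (REps A) l r) = []"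

definition deriv_tree :: "('n,'a) rule set \<Rightarrow> 'n \<Rightarrow> ('n,'a) dtree \<Rightarrow> 'a list \<Rightarrow> bool" where
  "deriv_tree P S T w \<longleftrightarrow> wf_tree P T \<and> label T = S \<and> yield T = map Let w"

fun subtree_at :: "('n,'a) dtree \<Rightarrow> nat list \<Rightarrow> ('n,'a) dtree option" where
  "subtree_at t [] = Some t"
| "subtree_at (Leaf r) (d # p) = None"
| "subtree_at (Node r l rr) (d # p) =
     (if d = 0 then subtree_at l p else if d = 1 then subtree_at rr p else None)"

definition is_node :: "('n,'a) dtree \<Rightarrow> nat list \<Rightarrow> bool" where
  "is_node T v \<longleftrightarrow> subtree_at T v \<noteq> None"

definition internal :: "('n,'a) dtree \<Rightarrow> nat list \<Rightarrow> bool" where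
  "internal T v \<longleftrightarrow> (\<exists>r l rr. subtree_at T v = Some (Node r l rr))"

definition label_at :: "('n,'a) dtree \<Rightarrow> nat list \<Rightarrow> 'n" where
  "label_at T v = label (the (subtree_at T v))"

text \<open>To locate the segments of a node's yield inside w (also when they are empty),
  the yield is computed with zero-width boundary markers: node v contributes
  Mark v 0, Mark v 1 (just before its 1), Mark v 2 (just after its 1), Mark v 3.
  Markers are not letters; the position of a marker in w is 1 + the number of letters
  preceding it.\<close>
datatype 'a msym = MLet 'a | MHole | Mark "nat list" nat

fun msubst :: "'a msym list \<Rightarrow> 'a msym list \<Rightarrow> 'a msym list" where
  "msubst [] ys = []"
| "msubst (x # xs) ys = (if x = MHole then ys @ xs else x # msubst xs ys)"

fun mark_hole :: "nat list \<Rightarrow> 'a msym list \<Rightarrow> 'a msym list" where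
  "mark_hole p [] = []"
| "mark_hole p (x # xs) =
     (if x = MHole then Mark p 1 # MHole # Mark p 2 # xs else x # mark_hole p xs)"

definition wrap :: "nat list \<Rightarrow> 'a msym list \<Rightarrow> 'a msym list" where
  "wrap p xs = Mark p 0 # mark_hole p xs @ [Mark p 3]"

fun msym_of :: "'a sym1 \<Rightarrow> 'a msym" where
  "msym_of (Let a) = MLet a"
| "msym_of One = MHole"

fun myield :: "nat list \<Rightarrow> ('n,'a) dtree \<Rightarrow> 'a msym list" where
  "myield p (Leaf (RTerm A a)) = wrap p [msym_of a]"
| "myield p (Leaf (REps A)) = wrap p []"
| "myield p (Leaf (RConc A B C)) = wrap p []"
| "myield p (Leaf (RSubst A B C)) = wrap p []"
| "myield p (Node (RConc A B C) l r) = wrap p (myield (p @ [0]) l @ myield (p @ [1]) r)"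
| "myield p (Node (RSubst A B C) l r) = wrap p (msubst (myield (p @ [0]) l) (myield (p @ [1]) r))"
| "myield p (Node (RTerm A a) l r) = wrap p []"
| "myield p (Node (REps A) l r) = wrap p []"

fun is_mlet :: "'a msym \<Rightarrow> bool" where
  "is_mlet (MLet a) = True"
| "is_mlet MHole = False"
| "is_mlet (Mark p k) = False"

definition mpos :: "'a msym list \<Rightarrow> 'a msym \<Rightarrow> nat" where
  "mpos xs m = Suc (length (filter is_mlet (takeWhile (\<lambda>x. x \<noteq> m) xs)))"

text \<open>Constituent (i1, j1, i2, j2) of node v: its yield is a_{i1}..a_{j1-1} 1 a_{i2}..a_{j2-1}.\<close>
definition constituent :: "('n,'a) dtree \<Rightarrow> nat list \<Rightarrow> nat \<times> nat \<times> nat \<times> nat" where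
  "constituent T v =
     (let Y = myield [] T in
      (mpos Y (Mark v 0), mpos Y (Mark v 1), mpos Y (Mark v 2), mpos Y (Mark v 3)))"

definition direct_desc :: "('n \<Rightarrow> nat) \<Rightarrow> ('n,'a) dtree \<Rightarrow> nat list \<Rightarrow> nat list \<Rightarrow> bool" where
  "direct_desc rk T v v' \<longleftrightarrow>
     is_node T v \<and> is_node T v' \<and>
     (\<exists>q. q \<noteq> [] \<and> v' = v @ q \<and>
        (\<forall>k\<le>length q. rk (label_at T (v @ take k q)) = rk (label_at T v)))"

definition two_pump :: "('n \<Rightarrow> nat) \<Rightarrow> ('n,'a) dtree \<Rightarrow> nat list \<Rightarrow> nat list \<Rightarrow> bool" where
  "two_pump rk T v v' \<longleftrightarrow>
     internal T v \<and> internal T v' \<and> label_at T v = label_at T v' \<and>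
     rk (label_at T v) = 1 \<and> direct_desc rk T v v'"

definition pump_tuple :: "('n,'a) dtree \<Rightarrow> nat list \<Rightarrow> nat list \<Rightarrow>
    nat \<times> nat \<times> nat \<times> nat \<times> nat \<times> nat \<times> nat \<times> nat" where
  "pump_tuple T v v' =
     (case constituent T v of (i1, l1, i2, l2) \<Rightarrow>
      case constituent T v' of (j1, k1, j2, k2) \<Rightarrow> (i1, j1, k1, l1, i2, j2, k2, l2))"

definition pump_cases ::
  "nat \<times> nat \<times> nat \<times> nat \<times> nat \<times> nat \<times> nat \<times> nat \<Rightarrow>
   nat \<times> nat \<times> nat \<times> nat \<times> nat \<times> nat \<times> nat \<times> nat \<Rightarrow> bool" where
  "pump_cases \<pi> \<pi>' =
    (case \<pi> of (i1, j1, k1, l1, i2, j2, k2, l2) \<Rightarrow>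
     case \<pi>' of (i1', j1', k1', l1', i2', j2', k2', l2') \<Rightarrow>
       l2 \<le> i1'
     \<or> (sorted [i1, i1', l2', j1] \<or> sorted [k2, i1', l2', l2])
     \<or> sorted [i1, i1', j1', j1, k1, k1', l1', l1, i2, i2', j2', j2, k2, k2', l2', l2]
     \<or> sorted [i1, i1', j1', k1', j1, k1, l1', l1, i2, i2', j2, k2, j2', k2', l2', l2]
     \<or> sorted [i1, i1', j1, k1, j1', k1', l1', l1, i2, i2', j2', k2', j2, k2, l2', l2]
     \<or> sorted [i1, i1', j1, j1', k1', k1, l1', l1, i2, i2', j2, j2', k2', k2, l2', l2]
     \<or> sorted [k1, i1', l1', l1, i2, i2', l2', j2]
     \<or> sorted [i1, i1', l1', j1, k2, i2', l2', l2]
     \<or> (sorted [k1, i1', l2', l1] \<or> sorted [i2, i1', l2', j2])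
     \<or> sorted [j1, i1', l1', k1, j2, i2', l2', k2]
     \<or> (sorted [j1, i1', l2', k1] \<or> sorted [j2, i1', l2', k2])
     \<or> sorted [l1, i1', l2', i2])"

end

theory Submission
  imports Defs
begin


definition patn :: "nat \<Rightarrow> nat \<Rightarrow> nat \<Rightarrow> nat \<Rightarrow> nat \<Rightarrow> nat \<Rightarrow> nat \<Rightarrow> nat \<Rightarrow> bool" where
"patn x0 x1 x2 x3 y0 y1 y2 y3 \<longleftrightarrow> x3 < y0 \<or> (x0 < y0 \<and> y3 < x1) \<or> (x2 < y0 \<and> y3 < x3)
  \<or> (x1 < y0 \<and> y3 < x2) \<or> (x0 < y0 \<and> y1 < x1 \<and> x2 < y2 \<and> y3 < x3)"

definition rel where "rel x0 x1 x2 x3 y0 y1 y2 y3 \<longleftrightarrow> patn x0 x1 x2 x3 y0 y1 y2 y3 \<or> patn y0 y1 y2 y3 x0 x1 x2 x3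
   \<or> (x0 = y0 \<and> x1 = y1 \<and> x2 = y2 \<and> x3 = y3)"

lemma rel_sym: "rel x0 x1 x2 x3 y0 y1 y2 y3 \<Longrightarrow> rel y0 y1 y2 y3 x0 x1 x2 x3"
  unfolding rel_def by auto

lemma relE:
  assumes "rel x0 x1 x2 x3 y0 y1 y2 y3"
  obtains "x3 < y0" | "x0 < y0" "y3 < x1" | "x2 < y0" "y3 < x3" | "x1 < y0" "y3 < x2"
   | "x0 < y0" "y1 < x1" "x2 < y2" "y3 < x3"
   | "y3 < x0" | "y0 < x0" "x3 < y1" | "y2 < x0" "x3 < y3" | "y1 < x0" "x3 < y2"
   | "y0 < x0" "x1 < y1" "y2 < x2" "x3 < y3"
   | "x0 = y0" "x1 = y1" "x2 = y2" "x3 = y3"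
  using assms unfolding rel_def patn_def by blast

lemma sc: "sorted (x#y#z#zs) = (x \<le> y \<and> sorted (y#z#zs))" "sorted [x,y] = (x \<le> y)" for x y z :: nat by auto

lemma pc1: fixes i1 j1 k1 l1 i2 j2 k2 l2 I1 J1 K1 L1 I2 J2 K2 L2 :: nat
  assumes "l2 \<le> I1"
  shows "pump_cases (i1,j1,k1,l1,i2,j2,k2,l2) (I1,J1,K1,L1,I2,J2,K2,L2)"
  unfolding pump_cases_def prod.case sc using assms by simp

lemma pc2a: fixes i1 j1 k1 l1 i2 j2 k2 l2 I1 J1 K1 L1 I2 J2 K2 L2 :: nat
  assumes "i1 \<le> I1" "I1 \<le> L2" "L2 \<le> j1"
  shows "pump_cases (i1,j1,k1,l1,i2,j2,k2,l2) (I1,J1,K1,L1,I2,J2,K2,L2)"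
  unfolding pump_cases_def prod.case sc using assms by simp

lemma pc2b: fixes i1 j1 k1 l1 i2 j2 k2 l2 I1 J1 K1 L1 I2 J2 K2 L2 :: nat
  assumes "k2 \<le> I1" "I1 \<le> L2" "L2 \<le> l2"
  shows "pump_cases (i1,j1,k1,l1,i2,j2,k2,l2) (I1,J1,K1,L1,I2,J2,K2,L2)"
  unfolding pump_cases_def prod.case sc using assms by simp

lemma pc3: fixes i1 j1 k1 l1 i2 j2 k2 l2 I1 J1 K1 L1 I2 J2 K2 L2 :: nat
  assumes "i1 \<le> I1" "I1 \<le> J1" "J1 \<le> j1" "j1 \<le> k1" "k1 \<le> K1" "K1 \<le> L1" "L1 \<le> l1" "l1 \<le> i2" "i2 \<le> I2" "I2 \<le> J2" "J2 \<le> j2" "j2 \<le> k2" "k2 \<le> K2" "K2 \<le> L2" "L2 \<le> l2"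
  shows "pump_cases (i1,j1,k1,l1,i2,j2,k2,l2) (I1,J1,K1,L1,I2,J2,K2,L2)"
  unfolding pump_cases_def prod.case sc using assms by simp

lemma pc4: fixes i1 j1 k1 l1 i2 j2 k2 l2 I1 J1 K1 L1 I2 J2 K2 L2 :: nat
  assumes "i1 \<le> I1" "I1 \<le> J1" "J1 \<le> K1" "K1 \<le> j1" "j1 \<le> k1" "k1 \<le> L1" "L1 \<le> l1" "l1 \<le> i2" "i2 \<le> I2" "I2 \<le> j2" "j2 \<le> k2" "k2 \<le> J2" "J2 \<le> K2" "K2 \<le> L2" "L2 \<le> l2"
  shows "pump_cases (i1,j1,k1,l1,i2,j2,k2,l2) (I1,J1,K1,L1,I2,J2,K2,L2)"
  unfolding pump_cases_def prod.case sc using assms by simp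

lemma pc5: fixes i1 j1 k1 l1 i2 j2 k2 l2 I1 J1 K1 L1 I2 J2 K2 L2 :: nat
  assumes "i1 \<le> I1" "I1 \<le> j1" "j1 \<le> k1" "k1 \<le> J1" "J1 \<le> K1" "K1 \<le> L1" "L1 \<le> l1" "l1 \<le> i2" "i2 \<le> I2" "I2 \<le> J2" "J2 \<le> K2" "K2 \<le> j2" "j2 \<le> k2" "k2 \<le> L2" "L2 \<le> l2"
  shows "pump_cases (i1,j1,k1,l1,i2,j2,k2,l2) (I1,J1,K1,L1,I2,J2,K2,L2)"
  unfolding pump_cases_def prod.case sc using assms by simp

lemma pc6: fixes i1 j1 k1 l1 i2 j2 k2 l2 I1 J1 K1 L1 I2 J2 K2 L2 :: nat
  assumes "i1 \<le> I1" "I1 \<le> j1" "j1 \<le> J1" "J1 \<le> K1" "K1 \<le> k1" "k1 \<le> L1" "L1 \<le> l1" "l1 \<le> i2" "i2 \<le> I2" "I2 \<le> j2" "j2 \<le> J2" "J2 \<le> K2" "K2 \<le> k2" "k2 \<le> L2" "L2 \<le> l2"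
  shows "pump_cases (i1,j1,k1,l1,i2,j2,k2,l2) (I1,J1,K1,L1,I2,J2,K2,L2)"
  unfolding pump_cases_def prod.case sc using assms by simp

lemma pc7: fixes i1 j1 k1 l1 i2 j2 k2 l2 I1 J1 K1 L1 I2 J2 K2 L2 :: nat
  assumes "k1 \<le> I1" "I1 \<le> L1" "L1 \<le> l1" "l1 \<le> i2" "i2 \<le> I2" "I2 \<le> L2" "L2 \<le> j2"
  shows "pump_cases (i1,j1,k1,l1,i2,j2,k2,l2) (I1,J1,K1,L1,I2,J2,K2,L2)"
  unfolding pump_cases_def prod.case sc using assms by simp

lemma pc8: fixes i1 j1 k1 l1 i2 j2 k2 l2 I1 J1 K1 L1 I2 J2 K2 L2 :: nat
  assumes "i1 \<le> I1" "I1 \<le> L1" "L1 \<le> j1" "j1 \<le> k2" "k2 \<le> I2" "I2 \<le> L2" "L2 \<le> l2"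
  shows "pump_cases (i1,j1,k1,l1,i2,j2,k2,l2) (I1,J1,K1,L1,I2,J2,K2,L2)"
  unfolding pump_cases_def prod.case sc using assms by simp

lemma pc9a: fixes i1 j1 k1 l1 i2 j2 k2 l2 I1 J1 K1 L1 I2 J2 K2 L2 :: nat
  assumes "k1 \<le> I1" "I1 \<le> L2" "L2 \<le> l1"
  shows "pump_cases (i1,j1,k1,l1,i2,j2,k2,l2) (I1,J1,K1,L1,I2,J2,K2,L2)"
  unfolding pump_cases_def prod.case sc using assms by simp

lemma pc9b: fixes i1 j1 k1 l1 i2 j2 k2 l2 I1 J1 K1 L1 I2 J2 K2 L2 :: nat
  assumes "i2 \<le> I1" "I1 \<le> L2" "L2 \<le> j2"
  shows "pump_cases (i1,j1,k1,l1,i2,j2,k2,l2) (I1,J1,K1,L1,I2,J2,K2,L2)"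
  unfolding pump_cases_def prod.case sc using assms by simp

lemma pc10: fixes i1 j1 k1 l1 i2 j2 k2 l2 I1 J1 K1 L1 I2 J2 K2 L2 :: nat
  assumes "j1 \<le> I1" "I1 \<le> L1" "L1 \<le> k1" "k1 \<le> j2" "j2 \<le> I2" "I2 \<le> L2" "L2 \<le> k2"
  shows "pump_cases (i1,j1,k1,l1,i2,j2,k2,l2) (I1,J1,K1,L1,I2,J2,K2,L2)"
  unfolding pump_cases_def prod.case sc using assms by simp

lemma pc11a: fixes i1 j1 k1 l1 i2 j2 k2 l2 I1 J1 K1 L1 I2 J2 K2 L2 :: nat
  assumes "j1 \<le> I1" "I1 \<le> L2" "L2 \<le> k1"
  shows "pump_cases (i1,j1,k1,l1,i2,j2,k2,l2) (I1,J1,K1,L1,I2,J2,K2,L2)"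
  unfolding pump_cases_def prod.case sc using assms by simp

lemma pc11b: fixes i1 j1 k1 l1 i2 j2 k2 l2 I1 J1 K1 L1 I2 J2 K2 L2 :: nat
  assumes "j2 \<le> I1" "I1 \<le> L2" "L2 \<le> k2"
  shows "pump_cases (i1,j1,k1,l1,i2,j2,k2,l2) (I1,J1,K1,L1,I2,J2,K2,L2)"
  unfolding pump_cases_def prod.case sc using assms by simp

lemma pc12: fixes i1 j1 k1 l1 i2 j2 k2 l2 I1 J1 K1 L1 I2 J2 K2 L2 :: nat
  assumes "l1 \<le> I1" "I1 \<le> L2" "L2 \<le> i2"
  shows "pump_cases (i1,j1,k1,l1,i2,j2,k2,l2) (I1,J1,K1,L1,I2,J2,K2,L2)"
  unfolding pump_cases_def prod.case sc using assms by simp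


lemma comb_or:
  fixes a0 a1 a2 a3 b0 b1 b2 b3 c0 c1 c2 c3 d0 d1 d2 d3 :: nat
  assumes base: "a0 < a1" "a1 < a2" "a2 < a3" "b0 < b1" "b1 < b2" "b2 < b3"
   "c0 < c1" "c1 < c2" "c2 < c3" "d0 < d1" "d1 < d2" "d2 < d3"
   "a0 < b0" "b1 < a1" "a2 < b2" "b3 < a3"
   "c0 < d0" "d1 < c1" "c2 < d2" "d3 < c3"
  and ac: "patn a0 a1 a2 a3 c0 c1 c2 c3 \<or> (a0 = c0 \<and> a1 = c1 \<and> a2 = c2 \<and> a3 = c3)"
  and bc: "rel b0 b1 b2 b3 c0 c1 c2 c3" and bd: "rel b0 b1 b2 b3 d0 d1 d2 d3"
  shows "pump_cases (a0,b0,b1,a1,a2,b2,b3,a3) (c0,d0,d1,c1,c2,d2,d3,c3)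
       \<or> pump_cases (c0,d0,d1,c1,c2,d2,d3,c3) (a0,b0,b1,a1,a2,b2,b3,a3)"
  using ac unfolding patn_def
proof (elim disjE conjE)
  assume "a3 < c0" then show ?thesis apply - apply (rule disjI1, rule pc1, linarith) done
next
  assume "a0 < c0" "c3 < a1"
  then show ?thesis using base
    apply - apply (rule relE[OF bc]; (linarith | (rule disjI1, rule pc2a; linarith) | (rule disjI1, rule pc11a; linarith) | (rule disjI1, rule pc9a; linarith))) done
next
  assume "a2 < c0" "c3 < a3"
  then show ?thesis using base
    apply - apply (rule relE[OF bc]; (linarith | (rule disjI1, rule pc2b; linarith) | (rule disjI1, rule pc11b; linarith) | (rule disjI1, rule pc9b; linarith))) done
next
  assume "a1 < c0" "c3 < a2"
  then show ?thesis using base apply - apply (rule disjI1, rule pc12; linarith) done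
next
  assume "a0 < c0" "c1 < a1" "a2 < c2" "c3 < a3"
  then show ?thesis using base
    apply - apply (rule relE[OF bc]; (linarith | (rule relE[OF bd]; (linarith | (rule disjI1, rule pc7; linarith) | (rule disjI1, rule pc8; linarith) | (rule disjI1, rule pc10; linarith) | (rule disjI1, rule pc5; linarith) | (rule disjI1, rule pc4; linarith) | (rule disjI1, rule pc6; linarith) | (rule disjI1, rule pc3; linarith))))) done
next
  assume "a0 = c0" "a1 = c1" "a2 = c2" "a3 = c3"
  then show ?thesis using base
    apply - apply (rule relE[OF bd]; (linarith | (rule disjI1, rule pc5; linarith) | (rule disjI1, rule pc4; linarith) | (rule disjI1, rule pc6; linarith) | (rule disjI1, rule pc3; linarith))) done
qed

lemma comb:
  fixes a0 a1 a2 a3 b0 b1 b2 b3 c0 c1 c2 c3 d0 d1 d2 d3 :: nat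
  assumes base: "a0 < a1" "a1 < a2" "a2 < a3" "b0 < b1" "b1 < b2" "b2 < b3"
   "c0 < c1" "c1 < c2" "c2 < c3" "d0 < d1" "d1 < d2" "d2 < d3"
   "a0 < b0" "b1 < a1" "a2 < b2" "b3 < a3"
   "c0 < d0" "d1 < c1" "c2 < d2" "d3 < c3"
   and r: "rel a0 a1 a2 a3 c0 c1 c2 c3" "rel a0 a1 a2 a3 d0 d1 d2 d3"
   "rel b0 b1 b2 b3 c0 c1 c2 c3" "rel b0 b1 b2 b3 d0 d1 d2 d3"
  shows "pump_cases (a0,b0,b1,a1,a2,b2,b3,a3) (c0,d0,d1,c1,c2,d2,d3,c3)
       \<or> pump_cases (c0,d0,d1,c1,c2,d2,d3,c3) (a0,b0,b1,a1,a2,b2,b3,a3)"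
proof -
  from r(1) have "(patn a0 a1 a2 a3 c0 c1 c2 c3 \<or> (a0 = c0 \<and> a1 = c1 \<and> a2 = c2 \<and> a3 = c3))
     \<or> patn c0 c1 c2 c3 a0 a1 a2 a3" unfolding rel_def by blast
  then show ?thesis
  proof
    assume "patn a0 a1 a2 a3 c0 c1 c2 c3 \<or> (a0 = c0 \<and> a1 = c1 \<and> a2 = c2 \<and> a3 = c3)"
    then show ?thesis using comb_or[OF base _ r(3) r(4)] by blast
  next
    assume "patn c0 c1 c2 c3 a0 a1 a2 a3"
    then show ?thesis using comb_or[of c0 c1 c2 c3 d0 d1 d2 d3 a0 a1 a2 a3 b0 b1 b2 b3] base rel_sym[OF r(2)] rel_sym[OF r(4)]
      by blast
  qed
qed


definition bef :: "'x list \<Rightarrow> 'x \<Rightarrow> 'x \<Rightarrow> bool" where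
  "bef L a b \<longleftrightarrow> (\<exists>xs ys zs. L = xs @ a # ys @ b # zs)"

lemma bef_Nil[simp]: "\<not> bef [] a b"
  unfolding bef_def by auto

lemma bef_Cons[simp]: "bef (x#xs) a b \<longleftrightarrow> (x = a \<and> b \<in> set xs) \<or> bef xs a b"
proof
  assume "bef (x#xs) a b"
  then obtain us ys zs where e: "x#xs = us @ a # ys @ b # zs" unfolding bef_def by blast
  show "(x = a \<and> b \<in> set xs) \<or> bef xs a b"
  proof (cases us)
    case Nil then show ?thesis using e by auto
  next
    case (Cons u us') then show ?thesis using e unfolding bef_def by auto
  qed
next
  assume "(x = a \<and> b \<in> set xs) \<or> bef xs a b"
  then show "bef (x#xs) a b"
  proof
    assume "x = a \<and> b \<in> set xs"
    then obtain ys zs where "xs = ys @ b # zs" by (metis split_list)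
    then show ?thesis using \<open>x = a \<and> b \<in> set xs\<close> unfolding bef_def by (metis append_Nil)
  next
    assume "bef xs a b"
    then obtain us ys zs where "xs = us @ a # ys @ b # zs" unfolding bef_def by blast
    then show ?thesis unfolding bef_def by (metis append_Cons)
  qed
qed

lemma bef_append[simp]: "bef (xs@ys) a b \<longleftrightarrow> bef xs a b \<or> bef ys a b \<or> (a \<in> set xs \<and> b \<in> set ys)"
  by (induction xs) auto

lemma bef_mem: "bef L a b \<Longrightarrow> a \<in> set L \<and> b \<in> set L"
  unfolding bef_def by auto

fun is_mark :: "'a msym \<Rightarrow> bool" where
  "is_mark (Mark q k) = True"
| "is_mark MHole = False"
| "is_mark (MLet a) = False"

abbreviation mk :: "'a msym list \<Rightarrow> 'a msym list" where "mk L \<equiv> filter is_mark L"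

lemma mark_hole_nohole: "MHole \<notin> set xs \<Longrightarrow> mark_hole p xs = xs"
  by (induction xs) auto

lemma mark_hole_split: "MHole \<notin> set X1 \<Longrightarrow> mark_hole p (X1 @ MHole # X2) = X1 @ Mark p 1 # MHole # Mark p 2 # X2"
  by (induction X1) auto

lemma msubst_nohole: "MHole \<notin> set xs \<Longrightarrow> msubst xs ys = xs"
  by (induction xs) auto

lemma msubst_split: "MHole \<notin> set X1 \<Longrightarrow> msubst (X1 @ MHole # X2) ys = X1 @ ys @ X2"
  by (induction X1) auto

lemma set_mark_hole: "set (mark_hole p xs) \<subseteq> set xs \<union> {Mark p 1, Mark p 2}"
  by (induction xs) auto

lemma set_msubst: "set (msubst xs ys) \<subseteq> set xs \<union> set ys"
  by (induction xs) auto

lemma set_wrap: "set (wrap p xs) \<subseteq> set xs \<union> {Mark p 0, Mark p 1, Mark p 2, Mark p 3}"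
  unfolding wrap_def using set_mark_hole by fastforce

lemma mem_wrap: "x \<in> set xs \<Longrightarrow> x \<in> set (wrap p xs)"
proof -
  assume x: "x \<in> set xs"
  show ?thesis
  proof (cases "MHole \<in> set xs")
    case True
    then obtain X1 X2 where "xs = X1 @ MHole # X2" "MHole \<notin> set X1" by (metis split_list_first)
    then show ?thesis using x unfolding wrap_def by (auto simp: mark_hole_split)
  next
    case False then show ?thesis using x unfolding wrap_def by (simp add: mark_hole_nohole)
  qed
qed

lemma bef_wrap: "bef xs a b \<Longrightarrow> bef (wrap p xs) a b"
proof -
  assume x: "bef xs a b"
  show ?thesis
  proof (cases "MHole \<in> set xs")
    case True
    then obtain X1 X2 where "xs = X1 @ MHole # X2" "MHole \<notin> set X1" by (metis split_list_first)
    then show ?thesis using x unfolding wrap_def by (auto simp: mark_hole_split)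
  next
    case False then show ?thesis using x unfolding wrap_def by (simp add: mark_hole_nohole)
  qed
qed

lemma hole_wrap: "MHole \<in> set (wrap p xs) \<longleftrightarrow> MHole \<in> set xs"
proof (cases "MHole \<in> set xs")
  case True
  then obtain X1 X2 where "xs = X1 @ MHole # X2" "MHole \<notin> set X1" by (metis split_list_first)
  then show ?thesis unfolding wrap_def by (auto simp: mark_hole_split)
next
  case False then show ?thesis unfolding wrap_def by (simp add: mark_hole_nohole)
qed

lemma prefix_marks: "Mark q k \<in> set (myield p t) \<Longrightarrow> \<exists>r. q = p @ r"
proof (induction p t arbitrary: q rule: myield.induct)
  case (5 p A B C l r)
  then show ?case using set_wrap[of p "myield (p @ [0]) l @ myield (p @ [1]) r"] by fastforce
next
  case (6 p A B C l r)
  then show ?case using set_wrap[of p "msubst (myield (p @ [0]) l) (myield (p @ [1]) r)"]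
      set_msubst[of "myield (p @ [0]) l" "myield (p @ [1]) r"] by fastforce
next
  case (1 p A a) then show ?case using set_wrap[of p "[msym_of a]"] by (cases a) auto
qed (auto dest!: set_wrap[THEN subsetD])

definition hole1 :: "'a msym list \<Rightarrow> bool" where
  "hole1 L \<longleftrightarrow> (\<exists>X1 X2. L = X1 @ MHole # X2 \<and> MHole \<notin> set X1 \<and> MHole \<notin> set X2)"

lemma hole1_mem: "hole1 L \<Longrightarrow> MHole \<in> set L"
  unfolding hole1_def by auto

lemma hole1_wrap: "hole1 xs \<Longrightarrow> hole1 (wrap p xs)"
proof -
  assume "hole1 xs"
  then obtain X1 X2 where x: "xs = X1 @ MHole # X2" "MHole \<notin> set X1" "MHole \<notin> set X2"
    unfolding hole1_def by blast
  then have "wrap p xs = (Mark p 0 # X1 @ [Mark p 1]) @ MHole # (Mark p 2 # X2 @ [Mark p 3])"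
    unfolding wrap_def by (simp add: mark_hole_split)
  then show ?thesis unfolding hole1_def using x by (metis Un_iff insert_iff list.set(2) msym.distinct(5) set_append set_simps(1) empty_iff)
qed

lemma hole1_app1: "hole1 xs \<Longrightarrow> MHole \<notin> set ys \<Longrightarrow> hole1 (xs @ ys)"
  unfolding hole1_def by fastforce

lemma hole1_app2: "hole1 ys \<Longrightarrow> MHole \<notin> set xs \<Longrightarrow> hole1 (xs @ ys)"
  unfolding hole1_def by (metis Un_iff append.assoc append_Cons set_append)

lemma hole1_mid: "hole1 ys \<Longrightarrow> MHole \<notin> set X1 \<Longrightarrow> MHole \<notin> set X2 \<Longrightarrow> hole1 (X1 @ ys @ X2)"
  by (metis hole1_app1 hole1_app2)

lemma label_Node[simp]: "label (Node r l rr) = lhs r"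
  unfolding label_def by simp
lemma label_Leaf[simp]: "label (Leaf r) = lhs r"
  unfolding label_def by simp

definition ord4 :: "'a msym list \<Rightarrow> nat list \<Rightarrow> bool" where
  "ord4 L q \<longleftrightarrow> bef L (Mark q 0) (Mark q 1) \<and> bef L (Mark q 1) (Mark q 2) \<and> bef L (Mark q 2) (Mark q 3)"

definition hpos :: "'a msym list \<Rightarrow> nat list \<Rightarrow> bool" where
  "hpos L q \<longleftrightarrow> bef L MHole (Mark q 0) \<or> bef L (Mark q 3) MHole \<or> (bef L (Mark q 1) MHole \<and> bef L MHole (Mark q 2))"

definition pat :: "'a msym list \<Rightarrow> nat list \<Rightarrow> nat list \<Rightarrow> bool" where
  "pat L x y \<longleftrightarrow> bef L (Mark x 3) (Mark y 0)
   \<or> (bef L (Mark x 0) (Mark y 0) \<and> bef L (Mark y 3) (Mark x 1))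
   \<or> (bef L (Mark x 2) (Mark y 0) \<and> bef L (Mark y 3) (Mark x 3))
   \<or> (bef L (Mark x 1) (Mark y 0) \<and> bef L (Mark y 3) (Mark x 2))
   \<or> (bef L (Mark x 0) (Mark y 0) \<and> bef L (Mark y 1) (Mark x 1) \<and> bef L (Mark x 2) (Mark y 2) \<and> bef L (Mark y 3) (Mark x 3))"

definition INV :: "'a msym list \<Rightarrow> bool" where
  "INV L \<longleftrightarrow> (\<forall>q. Mark q 1 \<in> set L \<longrightarrow> ord4 L q \<and> (MHole \<in> set L \<longrightarrow> hpos L q)
       \<and> (\<forall>q'. Mark q' 1 \<in> set L \<longrightarrow> q \<noteq> q' \<longrightarrow> pat L q q' \<or> pat L q' q))"

definition embH :: "'a msym list \<Rightarrow> 'a msym list \<Rightarrow> bool" where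
  "embH L L' \<longleftrightarrow> (\<forall>a b. a \<noteq> MHole \<longrightarrow> b \<noteq> MHole \<longrightarrow> bef L a b \<longrightarrow> bef L' a b)"

definition emb :: "'a msym list \<Rightarrow> 'a msym list \<Rightarrow> bool" where
  "emb L L' \<longleftrightarrow> (\<forall>a b. bef L a b \<longrightarrow> bef L' a b)"

lemma emb_embH: "emb L L' \<Longrightarrow> embH L L'"
  unfolding emb_def embH_def by blast

lemma ord4_lift: "ord4 L q \<Longrightarrow> embH L L' \<Longrightarrow> ord4 L' q"
  unfolding ord4_def embH_def by blast

lemma pat_lift: "pat L q q' \<Longrightarrow> embH L L' \<Longrightarrow> pat L' q q'"
  unfolding pat_def embH_def by (metis msym.distinct(6))

lemma hpos_lift: "hpos L q \<Longrightarrow> emb L L' \<Longrightarrow> hpos L' q"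
  unfolding hpos_def emb_def by blast

lemma ord4_mem: "ord4 L q \<Longrightarrow> Mark q 0 \<in> set L \<and> Mark q 1 \<in> set L \<and> Mark q 2 \<in> set L \<and> Mark q 3 \<in> set L"
  unfolding ord4_def by (auto dest: bef_mem)

lemma emb_wrap: "emb xs (wrap p xs)"
  unfolding emb_def by (auto intro: bef_wrap)
lemma emb_app1: "emb xs (xs @ ys)"
  unfolding emb_def by auto
lemma emb_app2: "emb ys (xs @ ys)"
  unfolding emb_def by auto
lemma emb_mid: "emb ys (X1 @ ys @ X2)"
  unfolding emb_def by auto
lemma embH_mid: "MHole \<notin> set X1 \<Longrightarrow> embH (X1 @ MHole # X2) (X1 @ ys @ X2)"
  unfolding embH_def by auto

lemma INV_wrap:
  assumes inv: "INV xs" and np: "\<forall>k. Mark p k \<notin> set xs" and h: "MHole \<in> set xs \<longrightarrow> hole1 xs"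
  shows "INV (wrap p xs)"
proof (cases "MHole \<in> set xs")
  case False
  then have w: "wrap p xs = Mark p 0 # xs @ [Mark p 3]" unfolding wrap_def by (simp add: mark_hole_nohole)
  have e: "embH xs (wrap p xs)" by (rule emb_embH, rule emb_wrap)
  have m: "Mark q 1 \<in> set (wrap p xs) \<Longrightarrow> Mark q 1 \<in> set xs" for q using w by auto
  show ?thesis unfolding INV_def
  proof (intro allI impI conjI)
    fix q assume q: "Mark q 1 \<in> set (wrap p xs)"
    then show "ord4 (wrap p xs) q" using inv m e ord4_lift unfolding INV_def by blast
    show "MHole \<in> set (wrap p xs) \<Longrightarrow> hpos (wrap p xs) q" using False w by simp
    fix q' assume "Mark q' 1 \<in> set (wrap p xs)" "q \<noteq> q'"
    then show "pat (wrap p xs) q q' \<or> pat (wrap p xs) q' q"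
      using inv m q e pat_lift unfolding INV_def by blast
  qed
next
  case True
  then obtain X1 X2 where x: "xs = X1 @ MHole # X2" "MHole \<notin> set X1" "MHole \<notin> set X2"
    using h unfolding hole1_def by blast
  have w: "wrap p xs = Mark p 0 # X1 @ Mark p 1 # MHole # Mark p 2 # X2 @ [Mark p 3]"
    unfolding wrap_def using x by (simp add: mark_hole_split)
  have e: "emb xs (wrap p xs)" by (rule emb_wrap)
  have m: "Mark q 1 \<in> set (wrap p xs) \<Longrightarrow> q \<noteq> p \<Longrightarrow> Mark q 1 \<in> set xs" for q using w x by auto
  have np1: "Mark p k \<notin> set X1" "Mark p k \<notin> set X2" for k using np x by auto
  have ordp: "ord4 (wrap p xs) p" unfolding ord4_def w by simp
  have hp: "hpos (wrap p xs) p" unfolding hpos_def w using x by simp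
  have pp: "pat (wrap p xs) p q'" if q': "Mark q' 1 \<in> set (wrap p xs)" "q' \<noteq> p" for q'
  proof -
    have i: "Mark q' 1 \<in> set xs" using m q' by blast
    then have o: "ord4 xs q'" and hq: "hpos xs q'" using inv True unfolding INV_def by auto
    have mem: "Mark q' k \<in> set X1 \<or> Mark q' k \<in> set X2" if "k \<in> {0,1,2,3}" for k
      using ord4_mem[OF o] x that by auto
    from hq show ?thesis unfolding hpos_def
    proof (elim disjE conjE)
      assume "bef xs MHole (Mark q' 0)"
      then have "Mark q' 0 \<in> set X2" using x by (auto dest: bef_mem)
      then show ?thesis unfolding pat_def w using mem[of 3] by auto
    next
      assume "bef xs (Mark q' 3) MHole"
      then have "Mark q' 3 \<in> set X1" using x by (auto dest: bef_mem)
      then show ?thesis unfolding pat_def w using mem[of 0] by auto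
    next
      assume "bef xs (Mark q' 1) MHole" "bef xs MHole (Mark q' 2)"
      then have "Mark q' 1 \<in> set X1" "Mark q' 2 \<in> set X2" using x by (auto dest: bef_mem)
      then show ?thesis unfolding pat_def w using mem[of 0] mem[of 3] by auto
    qed
  qed
  show ?thesis unfolding INV_def
  proof (intro allI impI conjI)
    fix q assume q: "Mark q 1 \<in> set (wrap p xs)"
    show "ord4 (wrap p xs) q"
    proof (cases "q = p")
      case True then show ?thesis using ordp by simp
    next
      case False then show ?thesis using inv m[OF q] e emb_embH ord4_lift unfolding INV_def by blast
    qed
    show "hpos (wrap p xs) q"
    proof (cases "q = p")
      case True then show ?thesis using hp by simp
    next
      case False then show ?thesis using inv m[OF q] e hpos_lift True unfolding INV_def by blast
    qed
    fix q' assume q': "Mark q' 1 \<in> set (wrap p xs)" "q \<noteq> q'"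
    show "pat (wrap p xs) q q' \<or> pat (wrap p xs) q' q"
    proof (cases "q = p")
      case True then show ?thesis using pp q' by auto
    next
      case False
      show ?thesis
      proof (cases "q' = p")
        case True then show ?thesis using pp q False by auto
      next
        case False2: False
        then show ?thesis using inv m[OF q False] m[OF q'(1) False2] q' e emb_embH pat_lift
          unfolding INV_def by blast
      qed
    qed
  qed
qed

lemma INV_conc:
  assumes a: "INV xs" and b: "INV ys"
  shows "INV (xs @ ys)"
  unfolding INV_def
proof (intro allI impI conjI)
  fix q assume q: "Mark q 1 \<in> set (xs @ ys)"
  have ex: "embH xs (xs@ys)" "embH ys (xs@ys)" using emb_app1 emb_app2 emb_embH by blast+
  show "ord4 (xs @ ys) q" using q a b ex ord4_lift unfolding INV_def set_append Un_iff by blast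
  show "hpos (xs @ ys) q" if h: "MHole \<in> set (xs @ ys)"
  proof (cases "Mark q 1 \<in> set xs")
    case True
    then have o: "ord4 xs q" using a unfolding INV_def by auto
    show ?thesis
    proof (cases "MHole \<in> set xs")
      case True
      then show ?thesis using a \<open>Mark q 1 \<in> set xs\<close> hpos_lift emb_app1 unfolding INV_def by blast
    next
      case False
      then have "MHole \<in> set ys" using h by auto
      moreover have "Mark q 3 \<in> set xs" using ord4_mem[OF o] by blast
      ultimately have "bef (xs@ys) (Mark q 3) MHole" by simp
      then show ?thesis unfolding hpos_def by blast
    qed
  next
    case False
    then have qy: "Mark q 1 \<in> set ys" using q by auto
    then have o: "ord4 ys q" using b unfolding INV_def by auto
    show ?thesis
    proof (cases "MHole \<in> set ys")
      case True
      then show ?thesis using b qy hpos_lift emb_app2 unfolding INV_def by blast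
    next
      case False
      then have "MHole \<in> set xs" using h by auto
      moreover have "Mark q 0 \<in> set ys" using ord4_mem[OF o] by blast
      ultimately have "bef (xs@ys) MHole (Mark q 0)" by simp
      then show ?thesis unfolding hpos_def by blast
    qed
  qed
  fix q' assume q': "Mark q' 1 \<in> set (xs @ ys)" "q \<noteq> q'"
  have cross: "pat (xs@ys) x y" if "Mark x 1 \<in> set xs" "Mark y 1 \<in> set ys" for x y
  proof -
    have "ord4 xs x" "ord4 ys y" using that a b unfolding INV_def by auto
    then have "Mark x 3 \<in> set xs" "Mark y 0 \<in> set ys" using ord4_mem by blast+
    then have "bef (xs@ys) (Mark x 3) (Mark y 0)" by simp
    then show ?thesis unfolding pat_def by blast
  qed
  show "pat (xs @ ys) q q' \<or> pat (xs @ ys) q' q"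
  proof (cases "Mark q 1 \<in> set xs")
    case True
    then show ?thesis
    proof (cases "Mark q' 1 \<in> set xs")
      case True
      then show ?thesis using \<open>Mark q 1 \<in> set xs\<close> q' a ex pat_lift unfolding INV_def by blast
    next
      case False then show ?thesis using cross True q' by auto
    qed
  next
    case False
    then have qy: "Mark q 1 \<in> set ys" using q by auto
    show ?thesis
    proof (cases "Mark q' 1 \<in> set xs")
      case True
      then show ?thesis using cross qy by auto
    next
      case False
      then have "Mark q' 1 \<in> set ys" using q' by auto
      then show ?thesis using qy q' b ex pat_lift unfolding INV_def by blast
    qed
  qed
qed

lemma cross_subst:
  assumes x: "yl = X1 @ MHole # X2" "MHole \<notin> set X1" "MHole \<notin> set X2"
    and h: "hpos yl q" and o: "ord4 yr q'"
  shows "pat (X1 @ yr @ X2) q q' \<or> pat (X1 @ yr @ X2) q' q"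
  using h unfolding hpos_def
proof (elim disjE conjE)
  assume "bef yl MHole (Mark q 0)"
  then have "Mark q 0 \<in> set X2" using x by (auto dest: bef_mem)
  moreover have "Mark q' 3 \<in> set yr" using ord4_mem[OF o] by blast
  ultimately have "bef (X1 @ yr @ X2) (Mark q' 3) (Mark q 0)" by simp
  then show ?thesis unfolding pat_def by blast
next
  assume "bef yl (Mark q 3) MHole"
  then have "Mark q 3 \<in> set X1" using x by (auto dest: bef_mem)
  moreover have "Mark q' 0 \<in> set yr" using ord4_mem[OF o] by blast
  ultimately have "bef (X1 @ yr @ X2) (Mark q 3) (Mark q' 0)" by simp
  then show ?thesis unfolding pat_def by blast
next
  assume "bef yl (Mark q 1) MHole" "bef yl MHole (Mark q 2)"
  then have "Mark q 1 \<in> set X1" "Mark q 2 \<in> set X2" using x by (auto dest: bef_mem)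
  moreover have "Mark q' 0 \<in> set yr" "Mark q' 3 \<in> set yr" using ord4_mem[OF o] by blast+
  ultimately have "bef (X1 @ yr @ X2) (Mark q 1) (Mark q' 0)" "bef (X1 @ yr @ X2) (Mark q' 3) (Mark q 2)" by simp_all
  then show ?thesis unfolding pat_def by blast
qed

lemma INV_subst:
  assumes a: "INV yl" and b: "INV yr"
    and x: "yl = X1 @ MHole # X2" "MHole \<notin> set X1" "MHole \<notin> set X2"
  shows "INV (X1 @ yr @ X2)"
  unfolding INV_def
proof (intro allI impI conjI)
  let ?C = "X1 @ yr @ X2"
  have ex: "embH yl ?C" "embH yr ?C" using embH_mid[OF x(2)] emb_mid emb_embH x(1) by blast+
  have side: "Mark k 1 \<in> set ?C \<Longrightarrow> Mark k 1 \<in> set yl \<or> Mark k 1 \<in> set yr" for k using x by auto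
  have hl: "MHole \<in> set yl" using x by auto
  fix q assume q: "Mark q 1 \<in> set ?C"
  show "ord4 ?C q" using side[OF q] a b ex ord4_lift unfolding INV_def by blast
  show "hpos ?C q" if h: "MHole \<in> set ?C"
  proof -
    have hr: "MHole \<in> set yr" using h x by auto
    show ?thesis
    proof (cases "Mark q 1 \<in> set yr")
      case True
      then show ?thesis using b hr hpos_lift emb_mid unfolding INV_def by blast
    next
      case False
      then have "Mark q 1 \<in> set yl" using side[OF q] by auto
      then have "hpos yl q" using a hl unfolding INV_def by auto
      then have "bef yl MHole (Mark q 0) \<or> bef yl (Mark q 3) MHole \<or> (bef yl (Mark q 1) MHole \<and> bef yl MHole (Mark q 2))"
        unfolding hpos_def .
      then show ?thesis
      proof (elim disjE conjE)
        assume "bef yl MHole (Mark q 0)"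
        then have "Mark q 0 \<in> set X2" using x by (auto dest: bef_mem)
        then show ?thesis unfolding hpos_def using hr by auto
      next
        assume "bef yl (Mark q 3) MHole"
        then have "Mark q 3 \<in> set X1" using x by (auto dest: bef_mem)
        then show ?thesis unfolding hpos_def using hr by auto
      next
        assume "bef yl (Mark q 1) MHole" "bef yl MHole (Mark q 2)"
        then have "Mark q 1 \<in> set X1" "Mark q 2 \<in> set X2" using x by (auto dest: bef_mem)
        then show ?thesis unfolding hpos_def using hr by auto
      qed
    qed
  qed
  fix q' assume q': "Mark q' 1 \<in> set ?C" "q \<noteq> q'"
  show "pat ?C q q' \<or> pat ?C q' q"
  proof (cases "Mark q 1 \<in> set yr")
    case True
    show ?thesis
    proof (cases "Mark q' 1 \<in> set yr")
      case True
      then show ?thesis using \<open>Mark q 1 \<in> set yr\<close> q' b ex pat_lift unfolding INV_def by blast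
    next
      case False
      then have "Mark q' 1 \<in> set yl" using side[OF q'(1)] by auto
      then have "hpos yl q'" using a hl unfolding INV_def by auto
      moreover have "ord4 yr q" using True b unfolding INV_def by auto
      ultimately show ?thesis using cross_subst[OF x] by blast
    qed
  next
    case False
    then have ql: "Mark q 1 \<in> set yl" using side[OF q] by auto
    show ?thesis
    proof (cases "Mark q' 1 \<in> set yr")
      case True
      have "hpos yl q" using ql a hl unfolding INV_def by auto
      moreover have "ord4 yr q'" using True b unfolding INV_def by auto
      ultimately show ?thesis using cross_subst[OF x] by blast
    next
      case False
      then have "Mark q' 1 \<in> set yl" using side[OF q'(1)] by auto
      then show ?thesis using ql q' a ex pat_lift unfolding INV_def by blast
    qed
  qed
qed


lemma myield_wrap: "\<exists>xs. myield p t = wrap p xs"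
  by (cases "(p,t)" rule: myield.cases) auto

lemma first_unique: "A @ h # B = X1 @ h # X2 \<Longrightarrow> h \<notin> set A \<Longrightarrow> h \<notin> set X1 \<Longrightarrow> A = X1 \<and> B = X2"
proof (induction A arbitrary: X1)
  case Nil then show ?case by (cases X1) auto
next
  case (Cons a A) then show ?case by (cases X1) auto
qed

lemma hole1_unique: "hole1 L \<Longrightarrow> L = A @ MHole # B \<Longrightarrow> MHole \<notin> set A \<Longrightarrow> MHole \<notin> set B"
  unfolding hole1_def using first_unique by metis

lemma subtree_append: "subtree_at t v = Some s \<Longrightarrow> subtree_at t (v @ x) = subtree_at s x"
proof (induction t v rule: subtree_at.induct)
  case (3 r l rr d p) then show ?case by (auto split: if_splits)
qed auto

lemma mk_mark: "x \<in> set (mk L) \<Longrightarrow> \<exists>q k. x = Mark q k \<and> x \<in> set L"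
  by (cases x) auto

lemma disj_children: "x \<in> set (myield (p@[0]) l) \<Longrightarrow> x \<in> set (myield (p@[1]) rr) \<Longrightarrow> is_mark x \<Longrightarrow> False"
proof -
  assume a: "x \<in> set (myield (p@[0]) l)" "x \<in> set (myield (p@[1]) rr)" "is_mark x"
  obtain q k where x: "x = Mark q k" using a(3) by (cases x) auto
  from prefix_marks[of q k "p@[0]" l] prefix_marks[of q k "p@[1]" rr] a x
  obtain r1 r2 where "q = p @ [0] @ r1" "q = p @ [1] @ r2" by auto
  then show False by auto
qed

lemma distinct_wrap:
  assumes d: "distinct (mk xs)" and np: "\<forall>k. Mark p k \<notin> set xs"
  shows "distinct (mk (wrap p xs))"
proof (cases "MHole \<in> set xs")
  case True
  then obtain X1 X2 where "xs = X1 @ MHole # X2" "MHole \<notin> set X1" by (metis split_list_first)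
  then show ?thesis using d np unfolding wrap_def by (auto simp: mark_hole_split)
next
  case False then show ?thesis using d np unfolding wrap_def by (auto simp: mark_hole_nohole)
qed

context
  fixes \<Sigma> :: "'a set" and N :: "'n set" and P :: "('n,'a) rule set" and S :: 'n and rk :: "'n \<Rightarrow> nat"
  assumes cnf: "cnf_1dcfg \<Sigma> N P S rk"
begin

lemma cnf_conc: "RConc A B C \<in> P \<Longrightarrow> rk A = rk B + rk C \<and> rk A \<le> 1"
  using cnf unfolding cnf_1dcfg_def by fastforce
lemma cnf_subst: "RSubst A B C \<in> P \<Longrightarrow> rk B = 1 \<and> rk A = rk C \<and> rk C \<le> 1"
  using cnf unfolding cnf_1dcfg_def by fastforce
lemma cnf_term: "RTerm A a \<in> P \<Longrightarrow> rk A = rk_sym a"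
  using cnf unfolding cnf_1dcfg_def by fastforce
lemma cnf_eps: "REps A \<in> P \<Longrightarrow> rk A = 0"
  using cnf unfolding cnf_1dcfg_def by fastforce

lemma hole_inv: "wf_tree P t \<Longrightarrow>
   (rk (label t) = 1 \<and> hole1 (myield p t)) \<or> (rk (label t) = 0 \<and> MHole \<notin> set (myield p t))"
proof (induction t arbitrary: p)
  case (Leaf r)
  then show ?case
  proof (cases r)
    case (RTerm A a)
    then show ?thesis using Leaf cnf_term[of A a]
    proof (cases a)
      case One
      have "hole1 (wrap p [MHole])" by (rule hole1_wrap) (unfold hole1_def, rule exI[of _ "[]"], auto)
      then show ?thesis using Leaf cnf_term[of A a] RTerm One by simp
    qed (auto simp: hole_wrap)
  next
    case (REps A)
    then show ?thesis using Leaf cnf_eps[of A] by (auto simp: hole_wrap)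
  qed auto
next
  case (Node r l rr)
  show ?case
  proof (cases r)
    case (RConc A B C)
    have ih1: "(rk B = 1 \<and> hole1 (myield (p@[0]) l)) \<or> (rk B = 0 \<and> MHole \<notin> set (myield (p@[0]) l))"
      using Node RConc by auto
    have ih2: "(rk C = 1 \<and> hole1 (myield (p@[1]) rr)) \<or> (rk C = 0 \<and> MHole \<notin> set (myield (p@[1]) rr))"
      using Node RConc by auto
    have c: "rk A = rk B + rk C \<and> rk A \<le> 1" using cnf_conc Node RConc by auto
    show ?thesis using ih1 ih2 c RConc
      by (auto simp: hole_wrap hole1_wrap hole1_app1 hole1_app2 dest: hole1_mem)
  next
    case (RSubst A B C)
    have ih1: "rk B = 1 \<and> hole1 (myield (p@[0]) l) \<or> (rk B = 0 \<and> MHole \<notin> set (myield (p@[0]) l))"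
      using Node RSubst by auto
    have ih2: "(rk C = 1 \<and> hole1 (myield (p@[1]) rr)) \<or> (rk C = 0 \<and> MHole \<notin> set (myield (p@[1]) rr))"
      using Node RSubst by auto
    have c: "rk B = 1 \<and> rk A = rk C \<and> rk C \<le> 1" using cnf_subst Node RSubst by auto
    then obtain X1 X2 where x: "myield (p@[0]) l = X1 @ MHole # X2" "MHole \<notin> set X1" "MHole \<notin> set X2"
      using ih1 unfolding hole1_def by auto
    show ?thesis using ih2 c RSubst x
      by (auto simp: hole_wrap hole1_wrap msubst_split hole1_mid dest: hole1_mem)
  qed (use Node in auto)
qed


lemma INV_nomark: "(\<And>q. Mark q 1 \<notin> set L) \<Longrightarrow> INV L"
  unfolding INV_def by blast

lemma np_child: "Mark p k \<notin> set (myield (p @ [d]) t)"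
  using prefix_marks[of p k "p @ [d]" t] by auto

lemma inv_main: "wf_tree P t \<Longrightarrow> INV (myield p t)"
proof (induction t arbitrary: p)
  case (Leaf r)
  then show ?case
  proof (cases r)
    case (RTerm A a)
    have h1: "hole1 [MHole]" unfolding hole1_def by (rule exI[of _ "[]"]) auto
    show ?thesis using RTerm
      apply simp apply (rule INV_wrap) apply (rule INV_nomark)
      by (cases a; simp add: h1)+
  next
    case (REps A)
    then show ?thesis apply simp apply (rule INV_wrap) apply (rule INV_nomark) by simp_all
  qed (use Leaf in auto)
next
  case (Node r l rr)
  show ?case
  proof (cases r)
    case (RConc A B C)
    have w: "wf_tree P l" "wf_tree P rr" using Node RConc by auto
    have ih: "INV (myield (p@[0]) l)" "INV (myield (p@[1]) rr)" using Node w by auto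
    have hl: "MHole \<in> set (myield (p@[0]) l) \<Longrightarrow> hole1 (myield (p@[0]) l)"
      using hole_inv[OF w(1), of "p@[0]"] by auto
    have hr: "MHole \<in> set (myield (p@[1]) rr) \<Longrightarrow> hole1 (myield (p@[1]) rr)"
      using hole_inv[OF w(2), of "p@[1]"] by auto
    have c: "rk (label l) + rk (label rr) \<le> 1" using cnf_conc[of A B C] Node RConc by auto
    have hh: "MHole \<in> set (myield (p@[0]) l @ myield (p@[1]) rr) \<longrightarrow> hole1 (myield (p@[0]) l @ myield (p@[1]) rr)"
      using hole_inv[OF w(1), of "p@[0]"] hole_inv[OF w(2), of "p@[1]"] c
      by (auto intro: hole1_app1 hole1_app2 dest: hole1_mem)
    have e: "myield p (Node r l rr) = wrap p (myield (p@[0]) l @ myield (p@[1]) rr)" using RConc by simp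
    have np: "\<forall>k. Mark p k \<notin> set (myield (p@[0]) l @ myield (p@[1]) rr)"
      using np_child[of p _ 0 l] np_child[of p _ 1 rr] by auto
    show ?thesis unfolding e by (intro INV_wrap INV_conc ih hh np)
  next
    case (RSubst A B C)
    have w: "wf_tree P l" "wf_tree P rr" using Node RSubst by auto
    have ih: "INV (myield (p@[0]) l)" "INV (myield (p@[1]) rr)" using Node w by auto
    have c: "rk B = 1" "label l = B" using cnf_subst[of A B C] Node RSubst by auto
    obtain X1 X2 where x: "myield (p@[0]) l = X1 @ MHole # X2" "MHole \<notin> set X1" "MHole \<notin> set X2"
      using hole_inv[OF w(1), of "p@[0]"] c unfolding hole1_def by auto
    have hr: "MHole \<in> set (myield (p@[1]) rr) \<Longrightarrow> hole1 (myield (p@[1]) rr)"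
      using hole_inv[OF w(2), of "p@[1]"] by auto
    have hh: "MHole \<in> set (X1 @ myield (p@[1]) rr @ X2) \<longrightarrow> hole1 (X1 @ myield (p@[1]) rr @ X2)"
      using hr x hole1_mid by auto
    have np: "\<forall>k. Mark p k \<notin> set (X1 @ myield (p@[1]) rr @ X2)"
      using np_child[of p _ 0 l] np_child[of p _ 1 rr] x by auto
    have e: "myield p (Node r l rr) = wrap p (X1 @ myield (p@[1]) rr @ X2)" using RSubst x by (simp add: msubst_split)
    show ?thesis unfolding e by (intro INV_wrap INV_subst[OF ih x] hh np)
  qed (use Node in auto)
qed


lemma distinct_main: "wf_tree P t \<Longrightarrow> distinct (mk (myield p t))"
proof (induction t arbitrary: p)
  case (Leaf r)
  then show ?case
  proof (cases r)
    case (RTerm A a)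
    then show ?thesis by (cases a) (auto intro!: distinct_wrap)
  next
    case (REps A)
    then show ?thesis by (auto intro!: distinct_wrap)
  qed (use Leaf in auto)
next
  case (Node r l rr)
  show ?case
  proof (cases r)
    case (RConc A B C)
    have w: "wf_tree P l" "wf_tree P rr" using Node RConc by auto
    have ih: "distinct (mk (myield (p@[0]) l))" "distinct (mk (myield (p@[1]) rr))" using Node w by auto
    have e: "myield p (Node r l rr) = wrap p (myield (p@[0]) l @ myield (p@[1]) rr)" using RConc by simp
    have np: "\<forall>k. Mark p k \<notin> set (myield (p@[0]) l @ myield (p@[1]) rr)"
      using np_child[of p _ 0 l] np_child[of p _ 1 rr] by auto
    have "distinct (mk (myield (p@[0]) l @ myield (p@[1]) rr))"
      using ih disj_children[of _ p l rr] by auto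
    then show ?thesis unfolding e using np by (intro distinct_wrap)
  next
    case (RSubst A B C)
    have w: "wf_tree P l" "wf_tree P rr" using Node RSubst by auto
    have ih: "distinct (mk (myield (p@[0]) l))" "distinct (mk (myield (p@[1]) rr))" using Node w by auto
    have c: "rk B = 1" "label l = B" using cnf_subst[of A B C] Node RSubst by auto
    obtain X1 X2 where x: "myield (p@[0]) l = X1 @ MHole # X2" "MHole \<notin> set X1" "MHole \<notin> set X2"
      using hole_inv[OF w(1), of "p@[0]"] c unfolding hole1_def by auto
    have np: "\<forall>k. Mark p k \<notin> set (X1 @ myield (p@[1]) rr @ X2)"
      using np_child[of p _ 0 l] np_child[of p _ 1 rr] x by auto
    have e: "myield p (Node r l rr) = wrap p (X1 @ myield (p@[1]) rr @ X2)" using RSubst x by (simp add: msubst_split)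
    have "distinct (mk (X1 @ myield (p@[1]) rr @ X2))"
      using ih x disj_children[of _ p l rr] by auto
    then show ?thesis unfolding e using np by (intro distinct_wrap)
  qed (use Node in auto)
qed

lemma up_bef: "wf_tree P t \<Longrightarrow> subtree_at t r = Some s \<Longrightarrow> a \<noteq> MHole \<Longrightarrow> b \<noteq> MHole
   \<Longrightarrow> bef (myield (p@r) s) a b \<Longrightarrow> bef (myield p t) a b"
proof (induction r arbitrary: p t)
  case Nil then show ?case by simp
next
  case (Cons d r)
  then obtain rl l rr where t: "t = Node rl l rr" by (cases t) auto
  have cl: "bef (myield (p@[d]) (if d = 0 then l else rr)) a b \<and> (d = 0 \<or> d = 1)"
  proof -
    have dd: "d = 0 \<or> d = 1" using Cons.prems(2) t by (auto split: if_splits)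
    have sub: "subtree_at (if d = 0 then l else rr) r = Some s" using Cons.prems(2) t by (auto split: if_splits)
    have wfc: "wf_tree P (if d = 0 then l else rr)" using Cons.prems(1) t by auto
    show ?thesis using Cons.IH[OF wfc sub Cons.prems(3,4), of "p@[d]"] Cons.prems(5) dd by simp
  qed
  show ?case
  proof (cases rl)
    case (RConc A B C)
    then have "bef (myield (p@[0]) l @ myield (p@[1]) rr) a b" using cl by (auto split: if_splits)
    then show ?thesis using t RConc by (simp add: bef_wrap)
  next
    case (RSubst A B C)
    have w: "wf_tree P l" using Cons.prems(1) t RSubst by auto
    have c: "rk B = 1" "label l = B" using cnf_subst[of A B C] Cons.prems(1) t RSubst by auto
    obtain X1 X2 where x: "myield (p@[0]) l = X1 @ MHole # X2" "MHole \<notin> set X1" "MHole \<notin> set X2"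
      using hole_inv[OF w, of "p@[0]"] c unfolding hole1_def by auto
    have "bef (X1 @ myield (p@[1]) rr @ X2) a b"
      using cl x Cons.prems(3,4) embH_mid[OF x(2), of X2 "myield (p@[1]) rr"] emb_mid[of "myield (p@[1]) rr" X1 X2]
      unfolding embH_def emb_def by (auto split: if_splits)
    then show ?thesis using t RSubst x by (simp add: bef_wrap msubst_split)
  qed (use Cons.prems(1) t in auto)
qed

lemma spine: "wf_tree P s \<Longrightarrow> subtree_at s q = Some s' \<Longrightarrow>
   (\<forall>k\<le>length q. rk (label (the (subtree_at s (take k q)))) = 1) \<Longrightarrow>
   bef (myield v s) (Mark (v@q) 1) MHole \<and> bef (myield v s) MHole (Mark (v@q) 2)"
proof (induction q arbitrary: v s)
  case Nil
  then have r: "rk (label s) = 1" by auto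
  obtain xs where e: "myield v s = wrap v xs" using myield_wrap by blast
  have "MHole \<in> set xs" using hole_inv[OF Nil.prems(1), of v] r e hole_wrap hole1_mem by fastforce
  then obtain X1 X2 where "xs = X1 @ MHole # X2" "MHole \<notin> set X1" by (metis split_list_first)
  then show ?case using e unfolding wrap_def by (simp add: mark_hole_split)
next
  case (Cons d q)
  then obtain rl l rr where t: "s = Node rl l rr" by (cases s) auto
  let ?c = "if d = 0 then l else rr"
  have dd: "d = 0 \<or> d = 1" using Cons.prems(2) t by (auto split: if_splits)
  have sub: "subtree_at ?c q = Some s'" using Cons.prems(2) t by (auto split: if_splits)
  have wfc: "wf_tree P ?c" using Cons.prems(1) t by auto
  have rks: "rk (label s) = 1" using Cons.prems(3)[rule_format, of 0] by simp
  have rkc: "\<forall>k\<le>length q. rk (label (the (subtree_at ?c (take k q)))) = 1"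
  proof (intro allI impI)
    fix k assume "k \<le> length q"
    then have "rk (label (the (subtree_at s (take (Suc k) (d#q))))) = 1" using Cons.prems(3) by auto
    then show "rk (label (the (subtree_at ?c (take k q)))) = 1" using t dd by auto
  qed
  have rkc1: "rk (label ?c) = 1" using rkc[rule_format, of 0] by simp
  have ih: "bef (myield (v@[d]) ?c) (Mark (v@d#q) 1) MHole \<and> bef (myield (v@[d]) ?c) MHole (Mark (v@d#q) 2)"
    using Cons.IH[OF wfc sub rkc, of "v@[d]"] by simp
  show ?case
  proof (cases rl)
    case (RConc A B C)
    then show ?thesis using t ih dd by (auto simp: bef_wrap)
  next
    case (RSubst A B C)
    have w: "wf_tree P l" "wf_tree P rr" using Cons.prems(1) t RSubst by auto
    have c: "rk B = 1" "label l = B" "rk A = rk C" "label rr = C" "lhs rl = A"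
      using cnf_subst[of A B C] Cons.prems(1) t RSubst by auto
    obtain X1 X2 where x: "myield (v@[0]) l = X1 @ MHole # X2" "MHole \<notin> set X1" "MHole \<notin> set X2"
      using hole_inv[OF w(1), of "v@[0]"] c unfolding hole1_def by auto
    have hr: "MHole \<in> set (myield (v@[1]) rr)"
      using hole_inv[OF w(2), of "v@[1]"] c rks t by (auto dest: hole1_mem)
    have "bef (X1 @ myield (v@[1]) rr @ X2) (Mark (v@d#q) 1) MHole \<and> bef (X1 @ myield (v@[1]) rr @ X2) MHole (Mark (v@d#q) 2)"
    proof (cases "d = 0")
      case True
      then have "Mark (v@d#q) 1 \<in> set X1" "Mark (v@d#q) 2 \<in> set X2" using ih x by (auto dest: bef_mem)
      then show ?thesis using hr by simp
    next
      case False
      then show ?thesis using ih dd by simp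
    qed
    then show ?thesis using t RSubst x by (simp add: bef_wrap msubst_split)
  qed (use Cons.prems(1) t in auto)
qed

lemma pumpS:
  assumes wf: "wf_tree P s" and q: "q \<noteq> []" and sub: "subtree_at s q = Some s'"
    and rkq: "\<forall>k\<le>length q. rk (label (the (subtree_at s (take k q)))) = 1"
  shows "bef (myield v s) (Mark v 0) (Mark (v@q) 0) \<and> bef (myield v s) (Mark (v@q) 1) (Mark v 1)
    \<and> bef (myield v s) (Mark v 2) (Mark (v@q) 2) \<and> bef (myield v s) (Mark (v@q) 3) (Mark v 3)"
proof -
  let ?L = "myield v s"
  have sp: "bef ?L (Mark (v@q) 1) MHole" "bef ?L MHole (Mark (v@q) 2)" using spine[OF wf sub rkq] by auto
  have o: "ord4 ?L (v@q)" using inv_main[OF wf, of v] bef_mem[OF sp(1)] unfolding INV_def by auto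
  have mm: "Mark (v@q) k \<in> set ?L" if "k \<in> {0,1,2,3}" for k using ord4_mem[OF o] that by auto
  have rks: "rk (label s) = 1" using rkq[rule_format, of 0] by simp
  obtain xs where e: "?L = wrap v xs" using myield_wrap by blast
  have h1: "hole1 ?L" using hole_inv[OF wf, of v] rks by auto
  have "MHole \<in> set xs" using h1 e hole_wrap hole1_mem by metis
  then obtain X1 X2 where x: "xs = X1 @ MHole # X2" "MHole \<notin> set X1" by (metis split_list_first)
  have L: "?L = (Mark v 0 # X1 @ [Mark v 1]) @ MHole # (Mark v 2 # X2 @ [Mark v 3])"
    using e x unfolding wrap_def by (simp add: mark_hole_split)
  have x2: "MHole \<notin> set X2" using hole1_unique[OF h1 L] x by auto
  have vq: "v @ q \<noteq> v" using q by simp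
  have L2: "?L = Mark v 0 # X1 @ Mark v 1 # MHole # Mark v 2 # X2 @ [Mark v 3]" using L by simp
  have a1: "Mark (v@q) 1 \<in> set X1" using sp(1) x x2 vq unfolding L2 by (auto dest: bef_mem)
  have a2: "Mark (v@q) 2 \<in> set X2" using sp(2) x x2 vq unfolding L2 by (auto dest: bef_mem)
  have a0: "Mark (v@q) 0 \<in> set (X1 @ Mark v 1 # MHole # Mark v 2 # X2 @ [Mark v 3])" using mm[of 0] vq unfolding L2 by auto
  have a3: "Mark (v@q) 3 \<in> set (Mark v 0 # X1 @ Mark v 1 # MHole # Mark v 2 # X2)" using mm[of 3] vq unfolding L2 by auto
  show ?thesis unfolding L2 using a0 a1 a2 a3 vq by auto
qed


lemma wf_sub: "wf_tree P t \<Longrightarrow> subtree_at t v = Some s \<Longrightarrow> wf_tree P s"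
proof (induction t v rule: subtree_at.induct)
  case (3 r l rr d p) then show ?case by (auto split: if_splits)
qed auto

lemma pump_facts:
  assumes wfT: "wf_tree P T" and tp: "two_pump rk T v v'"
  shows "v \<noteq> v' \<and> ord4 (myield [] T) v \<and> ord4 (myield [] T) v'
    \<and> bef (myield [] T) (Mark v 0) (Mark v' 0) \<and> bef (myield [] T) (Mark v' 1) (Mark v 1)
    \<and> bef (myield [] T) (Mark v 2) (Mark v' 2) \<and> bef (myield [] T) (Mark v' 3) (Mark v 3)"
proof -
  from tp obtain s where s: "subtree_at T v = Some s" unfolding two_pump_def internal_def by blast
  from tp have rv: "rk (label_at T v) = 1" unfolding two_pump_def by blast
  from tp obtain q where q: "q \<noteq> []" "v' = v @ q"
    and rq: "\<forall>k\<le>length q. rk (label_at T (v @ take k q)) = rk (label_at T v)"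
    and nv': "is_node T v'"
    unfolding two_pump_def direct_desc_def by blast
  have sq: "subtree_at T (v @ x) = subtree_at s x" for x using subtree_append[OF s] .
  obtain s' where s': "subtree_at s q = Some s'" using nv' q sq unfolding is_node_def by auto
  have rkq: "\<forall>k\<le>length q. rk (label (the (subtree_at s (take k q)))) = 1"
    using rq rv sq unfolding label_at_def by auto
  have wfs: "wf_tree P s" using wf_sub[OF wfT s] .
  have b: "bef (myield v s) (Mark v 0) (Mark (v@q) 0) \<and> bef (myield v s) (Mark (v@q) 1) (Mark v 1)
    \<and> bef (myield v s) (Mark v 2) (Mark (v@q) 2) \<and> bef (myield v s) (Mark (v@q) 3) (Mark v 3)"
    using pumpS[OF wfs q(1) s' rkq] .
  have up: "bef (myield v s) a c \<Longrightarrow> a \<noteq> MHole \<Longrightarrow> c \<noteq> MHole \<Longrightarrow> bef (myield [] T) a c" for a c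
    using up_bef[OF wfT s, of a c "[]"] by simp
  have bM: "bef (myield [] T) (Mark v 0) (Mark v' 0)" "bef (myield [] T) (Mark v' 1) (Mark v 1)"
    "bef (myield [] T) (Mark v 2) (Mark v' 2)" "bef (myield [] T) (Mark v' 3) (Mark v 3)"
    using b up q(2) by auto
  have inv: "INV (myield [] T)" using inv_main[OF wfT] .
  have o: "ord4 (myield [] T) v" "ord4 (myield [] T) v'"
    using inv bef_mem[OF bM(2)] unfolding INV_def by auto
  show ?thesis using bM o q by auto
qed

end


definition idx :: "'a msym list \<Rightarrow> 'a msym \<Rightarrow> nat" where
  "idx L m = length (takeWhile (\<lambda>x. x \<noteq> m) L)"

lemma idx_le_a: "length (takeWhile (\<lambda>x. x \<noteq> a) (xs @ a # r)) \<le> length xs"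
  by (induction xs) auto

lemma tw_app: "b \<notin> set xs \<Longrightarrow> takeWhile (\<lambda>x. x \<noteq> b) (xs @ r) = xs @ takeWhile (\<lambda>x. x \<noteq> b) r"
  by (induction xs) auto

lemma idx_lt:
  assumes d: "distinct (mk L)" and ma: "is_mark a" and mb: "is_mark b" and bf: "bef L a b"
  shows "idx L a < idx L b"
proof -
  obtain xs ys zs where L: "L = xs @ a # ys @ b # zs" using bf unfolding bef_def by blast
  have "distinct (mk xs @ a # mk ys @ b # mk zs)" using d ma mb unfolding L by simp
  then have nb: "b \<notin> set xs" "b \<noteq> a" "b \<notin> set ys" using mb by auto
  have "idx L b = length xs + Suc (length ys)"
    unfolding idx_def L using nb by (simp add: tw_app)
  moreover have "idx L a \<le> length xs" unfolding idx_def L using idx_le_a[of a xs "ys @ b # zs"] by simp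
  ultimately show ?thesis by simp
qed

lemma mpos_idx: "mpos L m = Suc (length (filter is_mlet (take (idx L m) L)))"
  unfolding mpos_def idx_def by (metis takeWhile_eq_take)

lemma phi_mono: "n \<le> m \<Longrightarrow> Suc (length (filter P (take n L))) \<le> Suc (length (filter P (take m L)))"
proof -
  assume "n \<le> m"
  then have "take m L = take n L @ drop n (take m L)" by (metis append_take_drop_id min.absorb1 take_take)
  then have "length (filter P (take m L)) = length (filter P (take n L)) + length (filter P (drop n (take m L)))"
    by (metis filter_append length_append)
  then show ?thesis by simp
qed

lemma pc_mono:
  fixes f :: "nat \<Rightarrow> nat"
  assumes m: "\<And>x y. x \<le> y \<Longrightarrow> f x \<le> f y"
    and h: "pump_cases (a1,a2,a3,a4,a5,a6,a7,a8) (b1,b2,b3,b4,b5,b6,b7,b8)"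
  shows "pump_cases (f a1,f a2,f a3,f a4,f a5,f a6,f a7,f a8) (f b1,f b2,f b3,f b4,f b5,f b6,f b7,f b8)"
  using h unfolding pump_cases_def prod.case sc
  by (elim disjE conjE; simp add: m)

lemma patI:
  assumes lt: "\<And>x i y j. bef L (Mark x i) (Mark y j) \<Longrightarrow> I x i < I y j"
    and p: "pat L x y"
  shows "patn (I x 0) (I x 1) (I x 2) (I x 3) (I y 0) (I y 1) (I y 2) (I y 3)"
  using p unfolding pat_def patn_def by (elim disjE conjE; blast dest: lt)

theorem lemma9:
  fixes \<Sigma> :: "'a set" and N :: "'n set" and P :: "('n,'a) rule set"
    and S :: 'n and rk :: "'n \<Rightarrow> nat"
    and T :: "('n,'a) dtree" and w :: "'a list"
    and v v' u u' :: "nat list"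
  assumes "cnf_1dcfg \<Sigma> N P S rk"
    and "deriv_tree P S T w"
    and "two_pump rk T v v'"
    and "two_pump rk T u u'"
  shows "pump_cases (pump_tuple T v v') (pump_tuple T u u')
       \<or> pump_cases (pump_tuple T u u') (pump_tuple T v v')"
proof -
  note cnf = assms(1)
  have wfT: "wf_tree P T" using assms(2) unfolding deriv_tree_def by blast
  define M where "M = myield [] T"
  have inv: "INV M" unfolding M_def by (rule inv_main[OF cnf wfT])
  have dist: "distinct (mk M)" unfolding M_def by (rule distinct_main[OF cnf wfT])
  have pv: "v \<noteq> v' \<and> ord4 M v \<and> ord4 M v'
    \<and> bef M (Mark v 0) (Mark v' 0) \<and> bef M (Mark v' 1) (Mark v 1)
    \<and> bef M (Mark v 2) (Mark v' 2) \<and> bef M (Mark v' 3) (Mark v 3)"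
    unfolding M_def by (rule pump_facts[OF cnf wfT assms(3)])
  have pu: "u \<noteq> u' \<and> ord4 M u \<and> ord4 M u'
    \<and> bef M (Mark u 0) (Mark u' 0) \<and> bef M (Mark u' 1) (Mark u 1)
    \<and> bef M (Mark u 2) (Mark u' 2) \<and> bef M (Mark u' 3) (Mark u 3)"
    unfolding M_def by (rule pump_facts[OF cnf wfT assms(4)])
  define I where "I x k = idx M (Mark x k)" for x k
  have lt: "bef M (Mark x i) (Mark y j) \<Longrightarrow> I x i < I y j" for x i y j
    unfolding I_def by (rule idx_lt[OF dist]) auto
  have ordI: "I x 0 < I x 1 \<and> I x 1 < I x 2 \<and> I x 2 < I x 3" if "ord4 M x" for x
    using that lt unfolding ord4_def by blast
  have relI: "rel (I x 0) (I x 1) (I x 2) (I x 3) (I y 0) (I y 1) (I y 2) (I y 3)"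
    if "ord4 M x" "ord4 M y" for x y
  proof (cases "x = y")
    case True then show ?thesis unfolding rel_def by simp
  next
    case False
    have "Mark x 1 \<in> set M" "Mark y 1 \<in> set M" using ord4_mem that by blast+
    then have "pat M x y \<or> pat M y x" using inv False unfolding INV_def by blast
    moreover have "patn (I a 0) (I a 1) (I a 2) (I a 3) (I b 0) (I b 1) (I b 2) (I b 3)" if "pat M a b" for a b
      by (rule patI[where L=M and I=I, OF lt that])
    ultimately show ?thesis unfolding rel_def by blast
  qed
  have c: "pump_cases (I v 0, I v' 0, I v' 1, I v 1, I v 2, I v' 2, I v' 3, I v 3)
                      (I u 0, I u' 0, I u' 1, I u 1, I u 2, I u' 2, I u' 3, I u 3)
         \<or> pump_cases (I u 0, I u' 0, I u' 1, I u 1, I u 2, I u' 2, I u' 3, I u 3)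
                      (I v 0, I v' 0, I v' 1, I v 1, I v 2, I v' 2, I v' 3, I v 3)"
    apply (rule comb)
    using ordI[of v] ordI[of v'] ordI[of u] ordI[of u'] pv pu lt relI[of v u] relI[of v u'] relI[of v' u] relI[of v' u']
    by blast+
  define f where "f n = Suc (length (filter is_mlet (take n M)))" for n
  have fm: "x \<le> y \<Longrightarrow> f x \<le> f y" for x y unfolding f_def by (rule phi_mono)
  have pt: "pump_tuple T x y = (f (I x 0), f (I y 0), f (I y 1), f (I x 1), f (I x 2), f (I y 2), f (I y 3), f (I x 3))" for x y
    unfolding pump_tuple_def constituent_def Let_def f_def I_def M_def by (simp add: mpos_idx)
  show ?thesis unfolding pt using c pc_mono[of f, OF fm] by blast
qed

end
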